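(* For any natural numbers $d \ge 1$ and $n>1$ there exists a natural number $t$ (depending only on $d$ and $n$) with the following property: for every finite geometric simplicial complex $\mathcal{T}$ in $\mathbb{R}^d$ all of whose vertices lie in the integer lattice $\mathbb{Z}^d$, the number of points of $\mathbb{Z}^d$ lying in $t\,|\mathcal{T}|$ is congruent to $\chi(\mathcal{T})$ modulo $n$.
   Context: A finite geometric simplicial complex $\mathcal{T}$ in $\mathbb{R}^d$ is a finite collection of (closed, geometric) simplices in $\mathbb{R}^d$ that is closed under taking faces and such that any two of its simplices intersect in a common face (possibly empty). Its underlying space $|\mathcal{T}|$ is the union of its simplices. $\chi(\mathcal{T})$ denotes the Euler characteristic of $\mathcal{T}$, i.e. $\sum_{k\ge 0}(-1)^k f_k$, where $f_k$ is the number of $k$-dimensional simplices of $\mathcal{T}$. For a set $X\subseteq\mathbb{R}^d$ and $t>0$, $tX=\{tx : x\in X\}$ is the image of $X$ under the homothety with center at the origin and ratio $t$. *)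

theory Defs
  imports "HOL-Analysis.Analysis"
begin

text \<open>A geometric simplex is represented by its (nonempty, affinely independent)
vertex set V; the simplex itself is convex hull V.\<close>

definition geom_simplicial_complex :: "('a::euclidean_space) set set \<Rightarrow> bool" where
  "geom_simplicial_complex K \<longleftrightarrow>
     finite K \<and>
     (\<forall>V\<in>K. V \<noteq> {} \<and> \<not> affine_dependent V) \<and>
     (\<forall>V\<in>K. \<forall>W. W \<subseteq> V \<and> W \<noteq> {} \<longrightarrow> W \<in> K) \<and>
     (\<forall>V\<in>K. \<forall>W\<in>K. convex hull V \<inter> convex hull W = convex hull (V \<inter> W))"

definition underlying_space :: "('a::euclidean_space) set set \<Rightarrow> 'a set" where
  "underlying_space K = (\<Union>V\<in>K. convex hull V)"

definition euler_char :: "'a set set \<Rightarrow> int" where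
  "euler_char K = (\<Sum>V\<in>K. (-1) ^ (card V - 1))"

definition int_lattice :: "(real^'n) set" where
  "int_lattice = {x. \<forall>i. x $ i \<in> \<int>}"

end

theory Submission
  imports Defs
begin


definition comps :: "'a set \<Rightarrow> nat \<Rightarrow> ('a \<Rightarrow> nat) set" where
  "comps V s = {m \<in> V \<rightarrow>\<^sub>E (UNIV::nat set). sum m V = s}"

lemma comps_finite: "finite V \<Longrightarrow> finite (comps V s)"
proof -
  assume V: "finite V"
  have "comps V s \<subseteq> V \<rightarrow>\<^sub>E {..s}"
  proof
    fix m assume m: "m \<in> comps V s"
    have "\<forall>v\<in>V. m v \<le> s"
      using m V unfolding comps_def by (metis (mono_tags, lifting) mem_Collect_eq member_le_sum zero_le)
    then show "m \<in> V \<rightarrow>\<^sub>E {..s}" using m unfolding comps_def by auto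
  qed
  then show ?thesis using V by (meson finite_PiE finite_atMost finite_subset)
qed

lemma comps_card: "finite V \<Longrightarrow> V \<noteq> {} \<Longrightarrow> card (comps V s) = (s + card V - 1) choose s"
proof (induction V arbitrary: s rule: finite_ne_induct)
  case (singleton a)
  have "comps {a} s = {\<lambda>x\<in>{a}. s}"
    unfolding comps_def by (auto simp: PiE_iff restrict_def extensional_def fun_eq_iff)
  then show ?case by simp
next
  case (insert a V)
  have bij: "bij_betw (\<lambda>(j,m). m(a:=j)) (SIGMA j:{..s}. comps V (s-j)) (comps (insert a V) s)"
  proof (rule bij_betw_byWitness[where f'="\<lambda>m. (m a, m(a:=undefined))"])
    show "\<forall>x\<in>SIGMA j:{..s}. comps V (s - j). (\<lambda>m. (m a, m(a := undefined))) ((\<lambda>(j, m). m(a := j)) x) = x"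
      using insert by (auto simp: comps_def PiE_iff extensional_def fun_eq_iff)
    show "\<forall>y\<in>comps (insert a V) s. (\<lambda>(j, m). m(a := j)) (y a, y(a := undefined)) = y"
      by auto
    show "(\<lambda>(j, m). m(a := j)) ` (SIGMA j:{..s}. comps V (s - j)) \<subseteq> comps (insert a V) s"
    proof
      fix y assume "y \<in> (\<lambda>(j, m). m(a := j)) ` (SIGMA j:{..s}. comps V (s - j))"
      then obtain j m where j: "j \<in> {..s}" and m: "m \<in> comps V (s-j)" and y: "y = m(a:=j)" by auto
      have "sum (m(a:=j)) V = sum m V" using insert by (intro sum.cong) auto
      then show "y \<in> comps (insert a V) s" using m j insert y
        by (auto simp: comps_def PiE_iff extensional_def)
    qed
    show "(\<lambda>m. (m a, m(a := undefined))) ` comps (insert a V) s \<subseteq> (SIGMA j:{..s}. comps V (s - j))"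
    proof
      fix y assume "y \<in> (\<lambda>m. (m a, m(a := undefined))) ` comps (insert a V) s"
      then obtain m where m: "m \<in> comps (insert a V) s" and y: "y = (m a, m(a := undefined))" by auto
      have e: "m a + sum m V = s" using m insert by (simp add: comps_def)
      have "sum (m(a:=undefined)) V = sum m V" using insert by (intro sum.cong) auto
      then show "y \<in> (SIGMA j:{..s}. comps V (s - j))"
        using m e insert y by (auto simp: comps_def PiE_iff extensional_def)
    qed
  qed
  have "card (comps (insert a V) s) = card (SIGMA j:{..s}. comps V (s-j))"
    using bij bij_betw_same_card by metis
  also have "\<dots> = (\<Sum>j\<le>s. card (comps V (s-j)))"
    by (rule card_SigmaI) (auto intro: comps_finite insert)
  also have "\<dots> = (\<Sum>j\<le>s. (s - j + card V - 1) choose (s-j))"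
    using insert by simp
  also have "\<dots> = (\<Sum>i\<le>s. (card V - 1 + i) choose i)"
  proof -
    have "(\<Sum>j\<le>s. (s - j + card V - 1) choose (s-j)) = (\<Sum>j\<le>s. (card V - 1 + (s - j)) choose (s-j))"
    proof (intro sum.cong refl)
      fix j assume "j \<in> {..s}"
      moreover have "card V > 0" using insert card_gt_0_iff by blast
      ultimately have "s - j + card V - 1 = card V - 1 + (s - j)" by auto
      then show "(s - j + card V - 1) choose (s-j) = (card V - 1 + (s - j)) choose (s-j)" by simp
    qed
    also have "\<dots> = (\<Sum>i\<le>s. (card V - 1 + i) choose i)"
      by (rule sum.reindex_bij_witness[where i="\<lambda>i. s - i" and j="\<lambda>j. s - j"]) auto
    finally show ?thesis .
  qed
  also have "\<dots> = Suc (card V - 1 + s) choose s" by (rule sum_choose_lower)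
  also have "\<dots> = (s + card (insert a V) - 1) choose s"
  proof -
    have "card V > 0" using insert card_gt_0_iff by blast
    then have "Suc (card V - 1 + s) = s + card (insert a V) - 1" using insert by simp
    then show ?thesis by simp
  qed
  finally show ?case .
qed



lemma fact_choose_prod:
  assumes "k \<le> a"
  shows "fact k * (a choose k) = (\<Prod>i\<in>{1..k}. (a - k + i))"
proof -
  have "fact k * fact (a-k) * (a choose k) = (fact a :: nat)" using binomial_fact_lemma[OF assms] .
  then have "(fact a :: nat) = (fact k * (a choose k)) * fact (a - k)" by (simp add: ac_simps)
  then have "fact k * (a choose k) = (fact a div fact (a - k) :: nat)"
    by (simp add: nonzero_mult_div_cancel_right[of "fact (a-k)"])
  also have "\<dots> = \<Prod>{a - k + 1..a}" using fact_div_fact[of "a-k" a] by simp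
  also have "\<dots> = \<Prod>{1 + (a-k)..k + (a-k)}" using assms by simp
  also have "\<dots> = (\<Prod>i\<in>{1..k}. (i + (a - k)))" by (rule prod.shift_bounds_cl_nat_ivl)
  finally show ?thesis by (simp add: add.commute)
qed

lemma prod_mod_cong:
  fixes f g :: "'a \<Rightarrow> int"
  assumes "\<And>i. i \<in> A \<Longrightarrow> f i mod N = g i mod N"
  shows "prod f A mod N = prod g A mod N"
proof -
  have "prod f A mod N = (\<Prod>i\<in>A. f i mod N) mod N" by (simp add: mod_prod_eq)
  also have "\<dots> = (\<Prod>i\<in>A. g i mod N) mod N" using assms by (metis (no_types, lifting) prod.cong)
  also have "\<dots> = prod g A mod N" by (simp add: mod_prod_eq)
  finally show ?thesis .
qed

lemma binom_mod:
  fixes n k h N :: nat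
  assumes h1: "1 \<le> h" and h2: "h \<le> k + 1" and dv: "n * fact k dvd N" and Nk: "k + 1 \<le> N"
  shows "int ((N - h + k) choose k) mod int n = (if h = k + 1 then (-1)^k mod int n else 0)"
proof -
  define C where "C = (N - h + k) choose k"
  define e :: int where "e = (if h = k + 1 then (-1)^k else 0)"
  have "fact k * C = (\<Prod>i\<in>{1..k}. (N - h + k - k + i))"
    unfolding C_def by (rule fact_choose_prod) (use h2 Nk in auto)
  then have "int (fact k * C) = int (\<Prod>i\<in>{1..k}. (N - h + k - k + i))" by simp
  also have "\<dots> = (\<Prod>i\<in>{1..k}. int (N - h + k - k + i))" by (rule of_nat_prod)
  also have "\<dots> = (\<Prod>i\<in>{1..k}. int N - int h + int i)"
    using h2 Nk by (intro prod.cong refl) (simp add: of_nat_diff)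
  finally have "fact k * int C = (\<Prod>i\<in>{1..k}. int N - int h + int i)" by simp
  then have "(fact k * int C) mod int N = (\<Prod>i\<in>{1..k}. int N - int h + int i) mod int N" by simp
  also have "\<dots> = (\<Prod>i\<in>{1..k}. int i - int h) mod int N"
  proof (rule prod_mod_cong)
    fix i show "(int N - int h + int i) mod int N = (int i - int h) mod int N"
      by (metis add.commute add_diff_eq mod_add_self2)
  qed
  also have "(\<Prod>i\<in>{1..k}. int i - int h) = fact k * e"
  proof (cases "h = k + 1")
    case True
    have "(\<Prod>i\<in>{1..k}. int i - int h) = (\<Prod>i\<in>{1..k}. (-1) * int (k + 1 - i))"
      using True by (intro prod.cong) auto
    also have "\<dots> = (-1)^k * (\<Prod>i\<in>{1..k}. int (k + 1 - i))"
      unfolding prod.distrib by simp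
    also have "(\<Prod>i\<in>{1..k}. int (k + 1 - i)) = (\<Prod>i\<in>{1..k}. int i)"
      by (rule prod.reindex_bij_witness[where i="\<lambda>i. k + 1 - i" and j="\<lambda>i. k + 1 - i"]) auto
    also have "\<dots> = fact k" by (simp add: fact_prod)
    finally show ?thesis using True e_def by simp
  next
    case False
    then have "h \<in> {1..k}" using h1 h2 by auto
    then have "(\<Prod>i\<in>{1..k}. int i - int h) = 0" by (intro prod_zero) auto
    then show ?thesis using False e_def by simp
  qed
  finally have "(fact k * int C) mod int N = (fact k * e) mod int N" .
  then have "int N dvd fact k * int C - fact k * e" by (simp add: mod_eq_dvd_iff)
  moreover have "int (n * fact k) dvd int N" using dv by (simp only: int_dvd_int_iff)
  ultimately have "int (n * fact k) dvd fact k * int C - fact k * e" by (rule dvd_trans[rotated])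
  then have "fact k * int n dvd fact k * (int C - e)" by (simp add: right_diff_distrib mult.commute)
  then have "int n dvd int C - e"
    by (subst (asm) dvd_mult_cancel_left) simp
  then have "int C mod int n = e mod int n" by (simp add: mod_eq_dvd_iff)
  then show ?thesis unfolding C_def e_def by (cases "h = k + 1") simp_all
qed



definition osimp :: "'a::real_vector set \<Rightarrow> 'a set" where
  "osimp V = {x. \<exists>c. (\<forall>v\<in>V. c v > 0) \<and> sum c V = 1 \<and> (\<Sum>v\<in>V. c v *\<^sub>R v) = x}"

lemma bary_uniq:
  fixes V :: "'a::real_vector set"
  assumes "finite V" "\<not> affine_dependent V" "sum a V = sum b V"
    "(\<Sum>v\<in>V. a v *\<^sub>R v) = (\<Sum>v\<in>V. b v *\<^sub>R v)" "v \<in> V"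
  shows "a v = b v"
proof (rule ccontr)
  assume ne: "a v \<noteq> b v"
  have "sum (\<lambda>w. a w - b w) V = 0" using assms(3) by (simp add: sum_subtractf)
  moreover have "(\<Sum>w\<in>V. (a w - b w) *\<^sub>R w) = 0"
    using assms(4) by (simp add: scaleR_diff_left sum_subtractf)
  moreover have "a v - b v \<noteq> 0" using ne by simp
  ultimately have "affine_dependent V"
    unfolding affine_dependent_explicit_finite[OF assms(1)] using assms(5) by blast
  then show False using assms(2) by simp
qed

lemma osimp_subset_hull: 
  assumes "finite V" shows "osimp V \<subseteq> convex hull V"
proof
  fix x assume "x \<in> osimp V"
  then obtain c where "\<forall>v\<in>V. c v > 0" "sum c V = 1" "(\<Sum>v\<in>V. c v *\<^sub>R v) = x"
    unfolding osimp_def by blast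
  then have "\<forall>v\<in>V. 0 \<le> c v" "sum c V = 1" "(\<Sum>v\<in>V. c v *\<^sub>R v) = x" by (auto intro: less_imp_le)
  then show "x \<in> convex hull V" unfolding convex_hull_finite[OF assms] by blast
qed

lemma hull_decomp:
  fixes V :: "'a::real_vector set"
  assumes "finite V"
  shows "convex hull V = (\<Union>W\<in>{W. W \<subseteq> V \<and> W \<noteq> {}}. osimp W)"
proof
  show "convex hull V \<subseteq> (\<Union>W\<in>{W. W \<subseteq> V \<and> W \<noteq> {}}. osimp W)"
  proof
    fix x assume "x \<in> convex hull V"
    then obtain u where u0: "\<forall>v\<in>V. 0 \<le> u v" and u1: "sum u V = 1" and ux: "(\<Sum>v\<in>V. u v *\<^sub>R v) = x"
      unfolding convex_hull_finite[OF assms] by auto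
    define W where "W = {v\<in>V. u v > 0}"
    have WV: "W \<subseteq> V" unfolding W_def by auto
    have fW: "finite W" using WV assms finite_subset by blast
    have z: "\<forall>v\<in>V - W. u v = 0" using u0 unfolding W_def by force
    have s1: "sum u V = sum u W"
      by (rule sum.mono_neutral_right[OF assms WV]) (use z in simp)
    have s2: "(\<Sum>v\<in>V. u v *\<^sub>R v) = (\<Sum>v\<in>W. u v *\<^sub>R v)"
      by (rule sum.mono_neutral_right[OF assms WV]) (use z in simp)
    have "W \<noteq> {}" using s1 u1 by auto
    moreover have "\<forall>v\<in>W. u v > 0" unfolding W_def by simp
    then have "x \<in> osimp W"
      unfolding osimp_def using s1 s2 u1 ux by (intro CollectI exI[of _ u]) simp
    ultimately show "x \<in> (\<Union>W\<in>{W. W \<subseteq> V \<and> W \<noteq> {}}. osimp W)" using WV by blast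
  qed
  show "(\<Union>W\<in>{W. W \<subseteq> V \<and> W \<noteq> {}}. osimp W) \<subseteq> convex hull V"
  proof (rule UN_least)
    fix W assume "W \<in> {W. W \<subseteq> V \<and> W \<noteq> {}}"
    then have WV: "W \<subseteq> V" by simp
    have "osimp W \<subseteq> convex hull W" by (rule osimp_subset_hull) (rule finite_subset[OF WV assms])
    also have "\<dots> \<subseteq> convex hull V" by (rule hull_mono[OF WV])
    finally show "osimp W \<subseteq> convex hull V" .
  qed
qed

lemma osimp_in_face:
  fixes V W :: "'a::real_vector set"
  assumes fV: "finite V" and iV: "\<not> affine_dependent V" and fW: "finite W"
    and x: "x \<in> osimp V" and xh: "x \<in> convex hull (V \<inter> W)"
  shows "V \<subseteq> W"
proof
  fix v assume v: "v \<in> V"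
  obtain c where c0: "\<forall>v\<in>V. c v > 0" and c1: "sum c V = 1" and cx: "(\<Sum>v\<in>V. c v *\<^sub>R v) = x"
    using x unfolding osimp_def by auto
  have fI: "finite (V \<inter> W)" using fV by simp
  obtain u where u1: "sum u (V \<inter> W) = 1" and ux: "(\<Sum>v\<in>V \<inter> W. u v *\<^sub>R v) = x"
    using xh unfolding convex_hull_finite[OF fI] by auto
  define u' where "u' = (\<lambda>v. if v \<in> W then u v else 0)"
  have "sum u' V = sum u (V \<inter> W)"
    unfolding u'_def using fV by (simp add: sum.If_cases Int_commute)
  moreover have "(\<Sum>v\<in>V. u' v *\<^sub>R v) = (\<Sum>v\<in>V \<inter> W. u v *\<^sub>R v)"
  proof -
    have "(\<Sum>v\<in>V. u' v *\<^sub>R v) = (\<Sum>v\<in>V. if v \<in> W then u v *\<^sub>R v else 0)"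
      unfolding u'_def by (intro sum.cong) auto
    also have "\<dots> = (\<Sum>v\<in>V \<inter> W. u v *\<^sub>R v)" using sum.inter_restrict[OF fV] by metis
    finally show ?thesis .
  qed
  ultimately have "c v = u' v"
    using bary_uniq[OF fV iV, of c u' v] c1 u1 cx ux v by simp
  then show "v \<in> W" using c0 v unfolding u'_def by (metis less_irrefl)
qed

lemma complex_props:
  assumes K: "geom_simplicial_complex K"
  shows "finite K" "\<And>U. U \<in> K \<Longrightarrow> \<not> affine_dependent U" "\<And>U. U \<in> K \<Longrightarrow> finite U"
    "\<And>U. U \<in> K \<Longrightarrow> U \<noteq> {}"
    "\<And>V W. V \<in> K \<Longrightarrow> W \<subseteq> V \<Longrightarrow> W \<noteq> {} \<Longrightarrow> W \<in> K"
    "\<And>V W. V \<in> K \<Longrightarrow> W \<in> K \<Longrightarrow> convex hull V \<inter> convex hull W = convex hull (V \<inter> W)"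
proof -
  note d = K[unfolded geom_simplicial_complex_def]
  show "finite K" using d by (elim conjE)
  show i: "\<And>U. U \<in> K \<Longrightarrow> \<not> affine_dependent U" using d by (elim conjE) blast
  show "\<And>U. U \<in> K \<Longrightarrow> finite U" using i aff_independent_finite by blast
  show "\<And>U. U \<in> K \<Longrightarrow> U \<noteq> {}" using d by (elim conjE) blast
  show "\<And>V W. V \<in> K \<Longrightarrow> W \<subseteq> V \<Longrightarrow> W \<noteq> {} \<Longrightarrow> W \<in> K" using d by (elim conjE) blast
  show "\<And>V W. V \<in> K \<Longrightarrow> W \<in> K \<Longrightarrow> convex hull V \<inter> convex hull W = convex hull (V \<inter> W)"
    using d by (elim conjE) blast
qed

lemma complex_osimp_disj:
  assumes K: "geom_simplicial_complex K" and V: "V \<in> K" and W: "W \<in> K"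
    and x: "x \<in> osimp V" "x \<in> osimp W"
  shows "V = W"
proof -
  note P = complex_props[OF K]
  have "x \<in> convex hull V" using osimp_subset_hull[OF P(3)[OF V]] x(1) by blast
  moreover have "x \<in> convex hull W" using osimp_subset_hull[OF P(3)[OF W]] x(2) by blast
  ultimately have xi: "x \<in> convex hull (V \<inter> W)" using P(6)[OF V W] by blast
  have 1: "V \<subseteq> W" by (rule osimp_in_face[OF P(3)[OF V] P(2)[OF V] P(3)[OF W] x(1) xi])
  have xi2: "x \<in> convex hull (W \<inter> V)" using xi by (simp add: Int_commute)
  have 2: "W \<subseteq> V" by (rule osimp_in_face[OF P(3)[OF W] P(2)[OF W] P(3)[OF V] x(2) xi2])
  show ?thesis using 1 2 by (rule subset_antisym)
qed

lemma complex_union: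
  assumes K: "geom_simplicial_complex K"
  shows "underlying_space K = (\<Union>V\<in>K. osimp V)"
  unfolding underlying_space_def
proof
  note P = complex_props[OF K]
  show "(\<Union>V\<in>K. convex hull V) \<subseteq> (\<Union>V\<in>K. osimp V)"
  proof (rule UN_least)
    fix V assume V: "V \<in> K"
    show "convex hull V \<subseteq> (\<Union>V\<in>K. osimp V)"
    proof
      fix x assume "x \<in> convex hull V"
      then obtain W where "W \<subseteq> V" "W \<noteq> {}" "x \<in> osimp W"
        unfolding hull_decomp[OF P(3)[OF V]] by blast
      moreover have "W \<in> K" using P(5)[OF V] calculation by blast
      ultimately show "x \<in> (\<Union>V\<in>K. osimp V)" by blast
    qed
  qed
  show "(\<Union>V\<in>K. osimp V) \<subseteq> (\<Union>V\<in>K. convex hull V)"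
    using osimp_subset_hull[OF P(3)] by blast
qed



lemma lat_comb:
  fixes V :: "(real^'d) set"
  assumes "V \<subseteq> int_lattice" "\<And>v. v \<in> V \<Longrightarrow> r v \<in> \<int>"
  shows "(\<Sum>v\<in>V. r v *\<^sub>R v) \<in> int_lattice"
  unfolding int_lattice_def
proof (safe)
  fix i
  have "(\<Sum>v\<in>V. r v *\<^sub>R v) $ i = (\<Sum>v\<in>V. r v * v $ i)" by simp
  also have "\<dots> \<in> \<int>"
    using assms unfolding int_lattice_def by (intro Ints_sum Ints_mult) auto
  finally show "(\<Sum>v\<in>V. r v *\<^sub>R v) $ i \<in> \<int>" .
qed

lemma lat_add: "x \<in> int_lattice \<Longrightarrow> y \<in> int_lattice \<Longrightarrow> x + y \<in> int_lattice"
  unfolding int_lattice_def by auto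

lemma lat_diff: "x \<in> int_lattice \<Longrightarrow> y \<in> int_lattice \<Longrightarrow> x - y \<in> int_lattice"
  unfolding int_lattice_def by auto

lemma lat_bounded_finite: "finite {x::real^'d. x \<in> int_lattice \<and> norm x \<le> B}"
proof -
  let ?S = "{x::real^'d. x \<in> int_lattice \<and> norm x \<le> B}"
  have "vec_nth ` ?S \<subseteq> (UNIV::'d set) \<rightarrow>\<^sub>E {r\<in>\<int>. \<bar>r\<bar> \<le> B}"
  proof
    fix f assume "f \<in> vec_nth ` ?S"
    then obtain x where x: "x \<in> ?S" "f = vec_nth x" by auto
    have "\<And>i. \<bar>x $ i\<bar> \<le> B" using x(1) component_le_norm_cart order_trans by blast
    then show "f \<in> (UNIV::'d set) \<rightarrow>\<^sub>E {r\<in>\<int>. \<bar>r\<bar> \<le> B}"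
      using x unfolding int_lattice_def by auto
  qed
  moreover have "finite ((UNIV::'d set) \<rightarrow>\<^sub>E {r\<in>\<int>. \<bar>r\<bar> \<le> B})"
    by (intro finite_PiE finite_abs_int_segment) auto
  ultimately have "finite (vec_nth ` ?S)" using finite_subset by blast
  moreover have "inj_on vec_nth ?S" by (simp add: inj_on_def vec_eq_iff)
  ultimately show ?thesis using finite_imageD by blast
qed

definition coefs :: "(real^'d) set \<Rightarrow> nat \<Rightarrow> ((real^'d) \<Rightarrow> real) set" where
  "coefs V N = {c \<in> V \<rightarrow>\<^sub>E (UNIV::real set). (\<forall>v\<in>V. c v > 0) \<and> sum c V = real N \<and>
      (\<Sum>v\<in>V. c v *\<^sub>R v) \<in> int_lattice}"

definition par :: "(real^'d) set \<Rightarrow> ((real^'d) \<Rightarrow> real) set" where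
  "par V = {\<mu> \<in> V \<rightarrow>\<^sub>E (UNIV::real set). (\<forall>v\<in>V. 0 < \<mu> v \<and> \<mu> v \<le> 1) \<and> sum \<mu> V \<in> \<int> \<and>
      (\<Sum>v\<in>V. \<mu> v *\<^sub>R v) \<in> int_lattice}"

lemma par_finite:
  fixes V :: "(real^'d) set"
  assumes fV: "finite V" and iV: "\<not> affine_dependent V"
  shows "finite (par V)"
proof -
  define B where "B = (\<Sum>v\<in>V. norm v)"
  let ?g = "\<lambda>\<mu>. ((\<Sum>v\<in>V. \<mu> v *\<^sub>R v), sum \<mu> V)"
  have "?g ` par V \<subseteq> {x::real^'d. x \<in> int_lattice \<and> norm x \<le> B} \<times> {r\<in>\<int>. \<bar>r\<bar> \<le> real (card V)}"
  proof
    fix p assume "p \<in> ?g ` par V"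
    then obtain \<mu> where m: "\<mu> \<in> par V" "p = ?g \<mu>" by auto
    have b: "\<And>v. v \<in> V \<Longrightarrow> 0 < \<mu> v \<and> \<mu> v \<le> 1" using m unfolding par_def by auto
    have "norm (\<Sum>v\<in>V. \<mu> v *\<^sub>R v) \<le> (\<Sum>v\<in>V. norm (\<mu> v *\<^sub>R v))" by (rule norm_sum)
    also have "\<dots> \<le> B" unfolding B_def
    proof (rule sum_mono)
      fix v assume "v \<in> V"
      then show "norm (\<mu> v *\<^sub>R v) \<le> norm v" using b[of v]
        by (simp add: mult_left_le_one_le)
    qed
    finally have n: "norm (\<Sum>v\<in>V. \<mu> v *\<^sub>R v) \<le> B" .
    have "sum \<mu> V \<le> (\<Sum>v\<in>V. 1)" using b by (intro sum_mono) auto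
    moreover have "0 \<le> sum \<mu> V" using b by (intro sum_nonneg) (auto intro: less_imp_le)
    ultimately have "\<bar>sum \<mu> V\<bar> \<le> real (card V)" by simp
    then show "p \<in> {x::real^'d. x \<in> int_lattice \<and> norm x \<le> B} \<times> {r\<in>\<int>. \<bar>r\<bar> \<le> real (card V)}"
      using m n unfolding par_def by auto
  qed
  moreover have "finite ({x::real^'d. x \<in> int_lattice \<and> norm x \<le> B} \<times> {r\<in>\<int>. \<bar>r\<bar> \<le> real (card V)})"
    using lat_bounded_finite finite_abs_int_segment by blast
  ultimately have "finite (?g ` par V)" using finite_subset by blast
  moreover have "inj_on ?g (par V)"
  proof (rule inj_onI)
    fix a b assume a: "a \<in> par V" and b: "b \<in> par V" and e: "?g a = ?g b"
    have "\<forall>v\<in>V. a v = b v" using bary_uniq[OF fV iV, of a b] e by auto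
    then show "a = b" using a b unfolding par_def by (auto intro: PiE_ext)
  qed
  ultimately show ?thesis using finite_imageD by blast
qed

lemma coefs_ext:
  assumes "a \<in> coefs V t" "b \<in> coefs V t" "\<And>v. v \<in> V \<Longrightarrow> a v = b v"
  shows "a = b"
proof -
  have "a \<in> V \<rightarrow>\<^sub>E UNIV" "b \<in> V \<rightarrow>\<^sub>E UNIV" using assms(1,2) unfolding coefs_def by blast+
  then show ?thesis using assms(3) by (rule PiE_ext)
qed

lemma lat_count_inj:
  fixes V :: "(real^'d) set"
  assumes fV: "finite V" and iV: "\<not> affine_dependent V"
  shows "inj_on (\<lambda>c. (\<Sum>v\<in>V. c v *\<^sub>R v)) (coefs V t)"
proof (rule inj_onI)
  fix a b assume a: "a \<in> coefs V t" and b: "b \<in> coefs V t"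
    and e: "(\<Sum>v\<in>V. a v *\<^sub>R v) = (\<Sum>v\<in>V. b v *\<^sub>R v)"
  have sa: "sum a V = sum b V" using a b unfolding coefs_def by simp
  show "a = b"
  proof (rule coefs_ext[OF a b])
    fix v assume "v \<in> V"
    then show "a v = b v" by (rule bary_uniq[OF fV iV sa e])
  qed
qed

lemma lat_count_img1:
  fixes V :: "(real^'d) set"
  assumes t: "t > 0" and c: "c \<in> coefs V t"
  shows "(\<Sum>v\<in>V. c v *\<^sub>R v) \<in> int_lattice \<inter> (\<lambda>x. real t *\<^sub>R x) ` osimp V"
proof -
  have c0: "\<forall>v\<in>V. c v > 0" and c1: "sum c V = real t" and cl: "(\<Sum>v\<in>V. c v *\<^sub>R v) \<in> int_lattice"
    using c unfolding coefs_def by blast+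
  define c' where "c' = (\<lambda>v. c v / real t)"
  have tp: "real t > 0" using t by simp
  have p: "\<forall>v\<in>V. c' v > 0" unfolding c'_def using c0 tp by simp
  have "sum c' V = sum c V / real t" unfolding c'_def by (rule sum_divide_distrib[symmetric])
  then have s: "sum c' V = 1" using c1 tp by simp
  have m: "(\<Sum>v\<in>V. c' v *\<^sub>R v) \<in> osimp V" unfolding osimp_def using p s by blast
  have "real t *\<^sub>R (\<Sum>v\<in>V. c' v *\<^sub>R v) = (\<Sum>v\<in>V. real t *\<^sub>R (c' v *\<^sub>R v))"
    by (rule scaleR_sum_right)
  also have "\<dots> = (\<Sum>v\<in>V. c v *\<^sub>R v)"
    unfolding c'_def using tp by (intro sum.cong refl) simp
  finally have e: "(\<Sum>v\<in>V. c v *\<^sub>R v) = real t *\<^sub>R (\<Sum>v\<in>V. c' v *\<^sub>R v)" by (rule sym)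
  have "(\<Sum>v\<in>V. c v *\<^sub>R v) \<in> (\<lambda>x. real t *\<^sub>R x) ` osimp V" using e m by (rule image_eqI)
  then show ?thesis using cl by blast
qed

lemma lat_count_img2:
  fixes V :: "(real^'d) set"
  assumes t: "t > 0" and y: "y \<in> int_lattice \<inter> (\<lambda>x. real t *\<^sub>R x) ` osimp V"
  shows "y \<in> (\<lambda>c. (\<Sum>v\<in>V. c v *\<^sub>R v)) ` coefs V t"
proof -
  have yl: "y \<in> int_lattice" using y by blast
  obtain z where z: "z \<in> osimp V" and yz: "y = real t *\<^sub>R z" using y by blast
  obtain c where c0: "\<forall>v\<in>V. c v > 0" and c1: "sum c V = 1" and cz: "(\<Sum>v\<in>V. c v *\<^sub>R v) = z"
    using z unfolding osimp_def by blast
  define c' where "c' = (\<lambda>v\<in>V. real t * c v)"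
  have tp: "real t > 0" using t by simp
  have "(\<Sum>v\<in>V. c' v *\<^sub>R v) = (\<Sum>v\<in>V. real t *\<^sub>R (c v *\<^sub>R v))"
    unfolding c'_def by (intro sum.cong refl) simp
  also have "\<dots> = real t *\<^sub>R z" unfolding cz[symmetric] by (rule scaleR_sum_right[symmetric])
  finally have e: "(\<Sum>v\<in>V. c' v *\<^sub>R v) = y" using yz by simp
  have "sum c' V = (\<Sum>v\<in>V. real t * c v)" unfolding c'_def by (intro sum.cong refl) simp
  also have "\<dots> = real t * sum c V" by (rule sum_distrib_left[symmetric])
  finally have s: "sum c' V = real t" using c1 by simp
  have p: "\<forall>v\<in>V. c' v > 0" unfolding c'_def using c0 tp by simp
  have ext: "c' \<in> V \<rightarrow>\<^sub>E UNIV" unfolding c'_def by simp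
  have "c' \<in> coefs V t" unfolding coefs_def using ext p s e yl by blast
  then show ?thesis using e by (intro image_eqI[where x=c']) (rule sym)
qed

lemma lat_count:
  fixes V :: "(real^'d) set"
  assumes fV: "finite V" and iV: "\<not> affine_dependent V" and t: "t > 0"
  shows "card (int_lattice \<inter> (\<lambda>x. real t *\<^sub>R x) ` osimp V) = card (coefs V t)"
proof -
  let ?f = "\<lambda>c. (\<Sum>v\<in>V. c v *\<^sub>R v)"
  have "?f ` coefs V t = int_lattice \<inter> (\<lambda>x. real t *\<^sub>R x) ` osimp V"
    using lat_count_img1[OF t] lat_count_img2[OF t] by blast
  then show ?thesis using card_image[OF lat_count_inj[OF fV iV, of t]] by simp
qed



definition hh :: "(real^'d) set \<Rightarrow> ((real^'d) \<Rightarrow> real) \<Rightarrow> nat" where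
  "hh V \<mu> = nat \<lfloor>sum \<mu> V\<rfloor>"

lemma par_sum:
  assumes fV: "finite V" and ne: "V \<noteq> {}" and m: "\<mu> \<in> par V"
  shows "real (hh V \<mu>) = sum \<mu> V" "1 \<le> hh V \<mu>" "hh V \<mu> \<le> card V"
proof -
  have b: "\<And>v. v \<in> V \<Longrightarrow> 0 < \<mu> v \<and> \<mu> v \<le> 1" and zi: "sum \<mu> V \<in> \<int>"
    using m unfolding par_def by blast+
  have pos: "sum \<mu> V > 0" using fV ne b by (intro sum_pos) auto
  have le: "sum \<mu> V \<le> real (card V)"
  proof -
    have "sum \<mu> V \<le> (\<Sum>v\<in>V. 1)" using b by (intro sum_mono) auto
    then show ?thesis by simp
  qed
  obtain z where z: "sum \<mu> V = of_int z" using zi by (auto elim: Ints_cases)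
  have zp: "z \<ge> 1" using pos z by simp
  show r: "real (hh V \<mu>) = sum \<mu> V" unfolding hh_def z using zp by simp
  show "1 \<le> hh V \<mu>" unfolding hh_def z using zp by simp
  show "hh V \<mu> \<le> card V" using r le by linarith
qed

lemma par_top:
  assumes fV: "finite V" and ne: "V \<noteq> {}" and m: "\<mu> \<in> par V" and h: "hh V \<mu> = card V"
  shows "\<mu> = (\<lambda>v\<in>V. 1)"
proof -
  have b: "\<And>v. v \<in> V \<Longrightarrow> 0 < \<mu> v \<and> \<mu> v \<le> 1" and ext: "\<mu> \<in> V \<rightarrow>\<^sub>E UNIV"
    using m unfolding par_def by blast+
  have "sum \<mu> V = real (card V)" using par_sum(1)[OF fV ne m] h by simp
  then have s0: "(\<Sum>v\<in>V. 1 - \<mu> v) = 0" by (simp add: sum_subtractf)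
  have nn: "\<And>v. v \<in> V \<Longrightarrow> 0 \<le> 1 - \<mu> v" using b by fastforce
  have z: "\<forall>v\<in>V. 1 - \<mu> v = 0" using iffD1[OF sum_nonneg_eq_0_iff[OF fV nn] s0] .
  have ext2: "(\<lambda>v\<in>V. 1::real) \<in> V \<rightarrow>\<^sub>E UNIV" by simp
  show ?thesis
  proof (rule PiE_ext[OF ext ext2])
    fix v assume "v \<in> V" then show "\<mu> v = (\<lambda>v\<in>V. 1::real) v" using z by simp
  qed
qed

lemma one_par:
  assumes "V \<subseteq> int_lattice" "finite V"
  shows "(\<lambda>v\<in>V. 1::real) \<in> par V"
proof -
  have "(\<Sum>v\<in>V. (\<lambda>v\<in>V. 1::real) v *\<^sub>R v) = (\<Sum>v\<in>V. (1::real) *\<^sub>R v)" by (intro sum.cong) auto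
  also have "\<dots> \<in> int_lattice" by (rule lat_comb[OF assms(1)]) simp
  finally have l: "(\<Sum>v\<in>V. (\<lambda>v\<in>V. 1::real) v *\<^sub>R v) \<in> int_lattice" .
  have "sum (\<lambda>v\<in>V. 1::real) V = real (card V)" by simp
  then have zi: "sum (\<lambda>v\<in>V. 1::real) V \<in> \<int>" by simp
  have ext: "(\<lambda>v\<in>V. 1::real) \<in> V \<rightarrow>\<^sub>E UNIV" by simp
  have bnd: "\<forall>v\<in>V. 0 < (\<lambda>v\<in>V. 1::real) v \<and> (\<lambda>v\<in>V. 1::real) v \<le> 1" by simp
  show ?thesis unfolding par_def using ext bnd zi l by blast
qed



definition gmap :: "(real^'d) set \<Rightarrow> ((real^'d) \<Rightarrow> real) \<times> ((real^'d) \<Rightarrow> nat) \<Rightarrow> ((real^'d) \<Rightarrow> real)" where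
  "gmap V p = (\<lambda>v\<in>V. fst p v + real (snd p v))"

definition gvinv :: "(real^'d) set \<Rightarrow> ((real^'d) \<Rightarrow> real) \<Rightarrow> ((real^'d) \<Rightarrow> real) \<times> ((real^'d) \<Rightarrow> nat)" where
  "gvinv V c = ((\<lambda>v\<in>V. c v - of_int (\<lceil>c v\<rceil> - 1)), (\<lambda>v\<in>V. nat (\<lceil>c v\<rceil> - 1)))"

lemma gmap_in:
  assumes fV: "finite V" and ne: "V \<noteq> {}" and VL: "V \<subseteq> int_lattice" and NV: "card V \<le> N"
    and m: "\<mu> \<in> par V" and c: "m \<in> comps V (N - hh V \<mu>)"
  shows "gmap V (\<mu>, m) \<in> coefs V N"
proof -
  have b: "\<And>v. v \<in> V \<Longrightarrow> 0 < \<mu> v \<and> \<mu> v \<le> 1" and ml: "(\<Sum>v\<in>V. \<mu> v *\<^sub>R v) \<in> int_lattice"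
    using m unfolding par_def by blast+
  have sm: "sum m V = N - hh V \<mu>" using c unfolding comps_def by blast
  have hN: "hh V \<mu> \<le> N" using par_sum(3)[OF fV ne m] NV by linarith
  have hr: "real (hh V \<mu>) = sum \<mu> V" by (rule par_sum(1)[OF fV ne m])
  define g where "g = gmap V (\<mu>, m)"
  have gv: "\<And>v. v \<in> V \<Longrightarrow> g v = \<mu> v + real (m v)" unfolding g_def gmap_def by simp
  have ext: "g \<in> V \<rightarrow>\<^sub>E UNIV" unfolding g_def gmap_def by simp
  have pos: "\<forall>v\<in>V. g v > 0"
  proof
    fix v assume v: "v \<in> V"
    have "\<mu> v > 0" using b[OF v] by simp
    then show "g v > 0" using gv[OF v] by simp
  qed
  have "sum g V = (\<Sum>v\<in>V. \<mu> v + real (m v))" using gv by (rule sum.cong[OF refl])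
  also have "\<dots> = sum \<mu> V + real (sum m V)" by (simp add: sum.distrib)
  also have "\<dots> = real N" using sm hN hr by (simp add: of_nat_diff)
  finally have s: "sum g V = real N" .
  have "(\<Sum>v\<in>V. g v *\<^sub>R v) = (\<Sum>v\<in>V. \<mu> v *\<^sub>R v + real (m v) *\<^sub>R v)"
    using gv by (intro sum.cong refl) (simp add: scaleR_add_left)
  also have "\<dots> = (\<Sum>v\<in>V. \<mu> v *\<^sub>R v) + (\<Sum>v\<in>V. real (m v) *\<^sub>R v)" by (rule sum.distrib)
  also have "\<dots> \<in> int_lattice"
    by (rule lat_add[OF ml lat_comb[OF VL]]) simp
  finally have l: "(\<Sum>v\<in>V. g v *\<^sub>R v) \<in> int_lattice" .
  show ?thesis unfolding g_def[symmetric] coefs_def using ext pos s l by blast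
qed

lemma gvinv_in:
  assumes fV: "finite V" and ne: "V \<noteq> {}" and VL: "V \<subseteq> int_lattice"
    and c: "c \<in> coefs V N"
  shows "fst (gvinv V c) \<in> par V" "snd (gvinv V c) \<in> comps V (N - hh V (fst (gvinv V c)))"
proof -
  have cp: "\<And>v. v \<in> V \<Longrightarrow> c v > 0" and cs: "sum c V = real N"
    and cl: "(\<Sum>v\<in>V. c v *\<^sub>R v) \<in> int_lattice"
    using c unfolding coefs_def by blast+
  define \<mu> where "\<mu> = fst (gvinv V c)"
  define m where "m = snd (gvinv V c)"
  have mu: "\<And>v. v \<in> V \<Longrightarrow> \<mu> v = c v - of_int (\<lceil>c v\<rceil> - 1)" unfolding \<mu>_def gvinv_def by simp
  have mm: "\<And>v. v \<in> V \<Longrightarrow> m v = nat (\<lceil>c v\<rceil> - 1)" unfolding m_def gvinv_def by simp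
  have ceil1: "\<And>v. v \<in> V \<Longrightarrow> \<lceil>c v\<rceil> \<ge> 1" using cp by simp
  have mr: "\<And>v. v \<in> V \<Longrightarrow> real (m v) = of_int (\<lceil>c v\<rceil> - 1)" using mm ceil1 by simp
  have extm: "\<mu> \<in> V \<rightarrow>\<^sub>E UNIV" unfolding \<mu>_def gvinv_def by simp
  have bnd: "\<forall>v\<in>V. 0 < \<mu> v \<and> \<mu> v \<le> 1"
  proof
    fix v assume v: "v \<in> V"
    have "of_int \<lceil>c v\<rceil> - 1 < c v" "c v \<le> of_int \<lceil>c v\<rceil>" by linarith+
    then show "0 < \<mu> v \<and> \<mu> v \<le> 1" using mu[OF v] by simp
  qed
  have sc: "sum \<mu> V = real N - real (sum m V)"
  proof -
    have "sum \<mu> V = (\<Sum>v\<in>V. c v - real (m v))" using mu mr by (intro sum.cong refl) simp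
    also have "\<dots> = sum c V - real (sum m V)" by (simp add: sum_subtractf)
    finally show ?thesis using cs by simp
  qed
  have "real N - real (sum m V) = of_int (int N - int (sum m V))" by simp
  then have zi: "sum \<mu> V \<in> \<int>" using sc by (metis Ints_of_int)
  have "(\<Sum>v\<in>V. \<mu> v *\<^sub>R v) = (\<Sum>v\<in>V. c v *\<^sub>R v - real (m v) *\<^sub>R v)"
    using mu mr by (intro sum.cong refl) (simp add: scaleR_diff_left)
  also have "\<dots> = (\<Sum>v\<in>V. c v *\<^sub>R v) - (\<Sum>v\<in>V. real (m v) *\<^sub>R v)" by (rule sum_subtractf)
  also have "\<dots> \<in> int_lattice" by (rule lat_diff[OF cl lat_comb[OF VL]]) simp
  finally have l: "(\<Sum>v\<in>V. \<mu> v *\<^sub>R v) \<in> int_lattice" .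
  have mpar: "\<mu> \<in> par V" unfolding par_def using extm bnd zi l by blast
  then show "fst (gvinv V c) \<in> par V" unfolding \<mu>_def .
  have "real (hh V \<mu>) = sum \<mu> V" by (rule par_sum(1)[OF fV ne mpar])
  then have "sum m V = N - hh V \<mu>" using sc by linarith
  moreover have "m \<in> V \<rightarrow>\<^sub>E UNIV" unfolding m_def gvinv_def by simp
  ultimately have "m \<in> comps V (N - hh V \<mu>)" unfolding comps_def by blast
  then show "snd (gvinv V c) \<in> comps V (N - hh V (fst (gvinv V c)))" unfolding m_def \<mu>_def .
qed



lemma gvinv_gmap:
  assumes m: "\<mu> \<in> par V" and c: "m \<in> comps V s"
  shows "gvinv V (gmap V (\<mu>, m)) = (\<mu>, m)"
proof -
  have b: "\<And>v. v \<in> V \<Longrightarrow> 0 < \<mu> v \<and> \<mu> v \<le> 1" and em: "\<mu> \<in> V \<rightarrow>\<^sub>E UNIV"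
    using m unfolding par_def by blast+
  have ec: "m \<in> V \<rightarrow>\<^sub>E UNIV" using c unfolding comps_def by blast
  have ce: "\<And>v. v \<in> V \<Longrightarrow> \<lceil>\<mu> v + real (m v)\<rceil> = int (m v) + 1"
  proof -
    fix v assume v: "v \<in> V"
    show "\<lceil>\<mu> v + real (m v)\<rceil> = int (m v) + 1"
      by (rule ceiling_unique) (use b[OF v] in simp_all)
  qed
  have g: "\<And>v. v \<in> V \<Longrightarrow> gmap V (\<mu>, m) v = \<mu> v + real (m v)" unfolding gmap_def by simp
  have 1: "fst (gvinv V (gmap V (\<mu>, m))) = \<mu>"
  proof (rule PiE_ext)
    show "fst (gvinv V (gmap V (\<mu>, m))) \<in> V \<rightarrow>\<^sub>E UNIV" unfolding gvinv_def by simp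
    show "\<mu> \<in> V \<rightarrow>\<^sub>E UNIV" by (rule em)
    fix v assume v: "v \<in> V"
    show "fst (gvinv V (gmap V (\<mu>, m))) v = \<mu> v"
      unfolding gvinv_def using v g[OF v] ce[OF v] by simp
  qed
  have 2: "snd (gvinv V (gmap V (\<mu>, m))) = m"
  proof (rule PiE_ext)
    show "snd (gvinv V (gmap V (\<mu>, m))) \<in> V \<rightarrow>\<^sub>E UNIV" unfolding gvinv_def by simp
    show "m \<in> V \<rightarrow>\<^sub>E UNIV" by (rule ec)
    fix v assume v: "v \<in> V"
    show "snd (gvinv V (gmap V (\<mu>, m))) v = m v"
      unfolding gvinv_def using v g[OF v] ce[OF v] by simp
  qed
  show ?thesis using 1 2 by (simp add: prod_eq_iff)
qed

lemma gmap_gvinv: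
  assumes c: "c \<in> coefs V N"
  shows "gmap V (gvinv V c) = c"
proof (rule PiE_ext)
  show "gmap V (gvinv V c) \<in> V \<rightarrow>\<^sub>E UNIV" unfolding gmap_def by simp
  show "c \<in> V \<rightarrow>\<^sub>E UNIV" using c unfolding coefs_def by blast
  fix v assume v: "v \<in> V"
  have "c v > 0" using c v unfolding coefs_def by blast
  then have "\<lceil>c v\<rceil> \<ge> 1" by simp
  then have "real (nat (\<lceil>c v\<rceil> - 1)) = of_int (\<lceil>c v\<rceil> - 1)" by simp
  then show "gmap V (gvinv V c) v = c v"
    unfolding gmap_def gvinv_def using v by simp
qed

lemma coefs_card:
  assumes fV: "finite V" and ne: "V \<noteq> {}" and iV: "\<not> affine_dependent V"
    and VL: "V \<subseteq> int_lattice" and NV: "card V \<le> N"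
  shows "card (coefs V N) = (\<Sum>\<mu>\<in>par V. card (comps V (N - hh V \<mu>)))"
proof -
  have "bij_betw (gmap V) (SIGMA \<mu>:par V. comps V (N - hh V \<mu>)) (coefs V N)"
  proof (rule bij_betw_byWitness[where f'="gvinv V"])
    show "\<forall>p\<in>SIGMA \<mu>:par V. comps V (N - hh V \<mu>). gvinv V (gmap V p) = p"
      using gvinv_gmap by blast
    show "\<forall>c\<in>coefs V N. gmap V (gvinv V c) = c" using gmap_gvinv by blast
    show "gmap V ` (SIGMA \<mu>:par V. comps V (N - hh V \<mu>)) \<subseteq> coefs V N"
      using gmap_in[OF fV ne VL NV] by blast
    show "gvinv V ` coefs V N \<subseteq> (SIGMA \<mu>:par V. comps V (N - hh V \<mu>))"
    proof
      fix p assume "p \<in> gvinv V ` coefs V N"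
      then obtain c where c: "c \<in> coefs V N" and p: "p = gvinv V c" by blast
      have "fst p \<in> par V" "snd p \<in> comps V (N - hh V (fst p))"
        using gvinv_in[OF fV ne VL c] p by simp_all
      then show "p \<in> (SIGMA \<mu>:par V. comps V (N - hh V \<mu>))"
        by (metis SigmaI prod.collapse)
    qed
  qed
  then have "card (coefs V N) = card (SIGMA \<mu>:par V. comps V (N - hh V \<mu>))"
    by (metis bij_betw_same_card)
  also have "\<dots> = (\<Sum>\<mu>\<in>par V. card (comps V (N - hh V \<mu>)))"
    by (rule card_SigmaI) (use par_finite[OF fV iV] comps_finite[OF fV] in auto)
  finally show ?thesis .
qed



lemma coefs_finite:
  assumes fV: "finite V" and ne: "V \<noteq> {}" and iV: "\<not> affine_dependent V"
    and VL: "V \<subseteq> int_lattice"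
  shows "finite (coefs V N)"
proof -
  have "coefs V N \<subseteq> gmap V ` (SIGMA \<mu>:par V. comps V (N - hh V \<mu>))"
  proof
    fix c assume c: "c \<in> coefs V N"
    have "gvinv V c \<in> (SIGMA \<mu>:par V. comps V (N - hh V \<mu>))"
      using gvinv_in[OF fV ne VL c] by (metis SigmaI prod.collapse)
    moreover have "c = gmap V (gvinv V c)" using gmap_gvinv[OF c] by simp
    ultimately show "c \<in> gmap V ` (SIGMA \<mu>:par V. comps V (N - hh V \<mu>))" by (rule rev_image_eqI)
  qed
  moreover have "finite (SIGMA \<mu>:par V. comps V (N - hh V \<mu>))"
    using par_finite[OF fV iV] comps_finite[OF fV] by blast
  ultimately show ?thesis using finite_subset by blast
qed

lemma coefs_mod:
  assumes fV: "finite V" and ne: "V \<noteq> {}" and iV: "\<not> affine_dependent V"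
    and VL: "V \<subseteq> int_lattice" and dv: "n * fact (card V - 1) dvd N" and NV: "card V \<le> N"
  shows "int (card (coefs V N)) mod int n = (-1)^(card V - 1) mod int n"
proof -
  define k where "k = card V - 1"
  have "card V > 0" using fV ne by (simp add: card_gt_0_iff)
  then have ck: "card V = k + 1" unfolding k_def by simp
  have dv': "n * fact k dvd N" using dv unfolding k_def .
  have NV': "k + 1 \<le> N" using NV ck by simp
  define F where "F = (\<lambda>\<mu>. card (comps V (N - hh V \<mu>)))"
  have Fm: "int (F \<mu>) mod int n = (if hh V \<mu> = k + 1 then (-1)^k mod int n else 0)" if m: "\<mu> \<in> par V" for \<mu>
  proof -
    define h where "h = hh V \<mu>"
    have h1: "1 \<le> h" and h2: "h \<le> k + 1" using par_sum[OF fV ne m] ck unfolding h_def by simp_all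
    have "F \<mu> = (N - h + card V - 1) choose (N - h)"
      unfolding F_def h_def by (rule comps_card[OF fV ne])
    also have "\<dots> = (N - h + k) choose (N - h)" using ck by simp
    also have "\<dots> = (N - h + k) choose k"
      using binomial_symmetric[of k "N - h + k"] by simp
    finally have "F \<mu> = (N - h + k) choose k" .
    moreover have "int ((N - h + k) choose k) mod int n = (if h = k + 1 then (-1)^k mod int n else 0)"
      by (rule binom_mod[OF h1 h2 dv']) (rule NV')
    ultimately show ?thesis unfolding h_def by simp
  qed
  define one where "one = (\<lambda>v\<in>V. 1::real)"
  have onep: "one \<in> par V" unfolding one_def by (rule one_par[OF VL fV])
  have "real (hh V one) = sum one V" by (rule par_sum(1)[OF fV ne onep])
  also have "\<dots> = real (card V)" unfolding one_def by simp
  finally have hone: "hh V one = k + 1" using ck by simp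
  have rest: "int n dvd int (F \<mu>)" if m: "\<mu> \<in> par V - {one}" for \<mu>
  proof -
    have "hh V \<mu> \<noteq> k + 1"
    proof
      assume "hh V \<mu> = k + 1"
      then have "\<mu> = one" unfolding one_def using par_top[OF fV ne] m ck by simp
      then show False using m by simp
    qed
    then have "int (F \<mu>) mod int n = 0" using Fm m by simp
    then show ?thesis by (simp add: dvd_eq_mod_eq_0)
  qed
  have fp: "finite (par V)" by (rule par_finite[OF fV iV])
  have "card (coefs V N) = sum F (par V)"
    unfolding F_def by (rule coefs_card[OF fV ne iV VL NV])
  also have "\<dots> = F one + sum F (par V - {one})" by (rule sum.remove[OF fp onep])
  finally have "int (card (coefs V N)) = int (F one) + (\<Sum>\<mu>\<in>par V - {one}. int (F \<mu>))" by simp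
  moreover have "int n dvd (\<Sum>\<mu>\<in>par V - {one}. int (F \<mu>))" using rest by (rule dvd_sum)
  ultimately have "int (card (coefs V N)) mod int n = int (F one) mod int n"
    by (metis dvd_imp_mod_0 mod_add_eq add.right_neutral mod_mod_trivial)
  also have "\<dots> = (-1)^k mod int n" using Fm[OF onep] hone by simp
  finally show ?thesis unfolding k_def .
qed



lemma piece_finite:
  fixes V :: "(real^'d) set"
  assumes fV: "finite V" and ne: "V \<noteq> {}" and iV: "\<not> affine_dependent V"
    and VL: "V \<subseteq> int_lattice" and t: "t > 0"
  shows "finite (int_lattice \<inter> (\<lambda>x. real t *\<^sub>R x) ` osimp V)"
proof -
  have "int_lattice \<inter> (\<lambda>x. real t *\<^sub>R x) ` osimp V \<subseteq> (\<lambda>c. (\<Sum>v\<in>V. c v *\<^sub>R v)) ` coefs V t"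
    using lat_count_img2[OF t] by blast
  moreover have "finite ((\<lambda>c. (\<Sum>v\<in>V. c v *\<^sub>R v)) ` coefs V t)"
    using coefs_finite[OF fV ne iV VL] by blast
  ultimately show ?thesis using finite_subset by blast
qed

theorem theorem1:
  fixes n :: nat
  assumes "n > 1"
  shows "\<exists>t::nat. t > 0 \<and>
    (\<forall>K :: (real^'d) set set.
       geom_simplicial_complex K \<and> (\<forall>V\<in>K. V \<subseteq> int_lattice) \<longrightarrow>
       int (card (int_lattice \<inter> ((\<lambda>x. real t *\<^sub>R x) ` underlying_space K))) mod int n
          = euler_char K mod int n)"
proof -
  define D where "D = DIM(real^'d)"
  define t where "t = n * fact D"
  have D1: "D \<ge> 1" unfolding D_def using DIM_positive by (simp add: Suc_le_eq)
  have tpos: "t > 0" unfolding t_def using assms by simp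
  have tD: "D + 1 \<le> t"
  proof -
    have "D \<le> fact D" by (rule fact_ge_self)
    moreover have "n \<ge> 2" using assms by simp
    ultimately have "2 * D \<le> n * fact D" by (intro mult_mono) auto
    then show ?thesis unfolding t_def using D1 by simp
  qed
  show ?thesis
  proof (intro exI conjI allI impI)
    show "t > 0" by (rule tpos)
    fix K :: "(real^'d) set set"
    assume "geom_simplicial_complex K \<and> (\<forall>V\<in>K. V \<subseteq> int_lattice)"
    then have K: "geom_simplicial_complex K" and KL: "\<And>V. V \<in> K \<Longrightarrow> V \<subseteq> int_lattice" by blast+
    note P = complex_props[OF K]
    let ?S = "\<lambda>V. int_lattice \<inter> (\<lambda>x. real t *\<^sub>R x) ` osimp V"
    have cardV: "card V \<le> D + 1" if V: "V \<in> K" for V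
    proof (rule ccontr)
      assume "\<not> card V \<le> D + 1"
      then have "card V \<ge> DIM(real^'d) + 2" unfolding D_def by simp
      then have "affine_dependent V" using affine_dependent_biggerset[OF P(3)[OF V]] by blast
      then show False using P(2)[OF V] by blast
    qed
    have eq: "int_lattice \<inter> (\<lambda>x. real t *\<^sub>R x) ` underlying_space K = (\<Union>V\<in>K. ?S V)"
      unfolding complex_union[OF K] by blast
    have disj: "\<forall>V\<in>K. \<forall>W\<in>K. V \<noteq> W \<longrightarrow> ?S V \<inter> ?S W = {}"
    proof (intro ballI impI)
      fix V W assume V: "V \<in> K" and W: "W \<in> K" and ne: "V \<noteq> W"
      show "?S V \<inter> ?S W = {}"
      proof (rule ccontr)
        assume "?S V \<inter> ?S W \<noteq> {}"
        then obtain x y where x: "x \<in> osimp V" and y: "y \<in> osimp W" and e: "real t *\<^sub>R x = real t *\<^sub>R y"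
          by blast
        have "x = y" using e tpos by simp
        then have "V = W" using complex_osimp_disj[OF K V W] x y by blast
        then show False using ne by blast
      qed
    qed
    have fin: "\<forall>V\<in>K. finite (?S V)"
      using piece_finite[OF P(3) P(4) P(2) KL tpos] by blast
    have "card (int_lattice \<inter> (\<lambda>x. real t *\<^sub>R x) ` underlying_space K) = (\<Sum>V\<in>K. card (?S V))"
      unfolding eq by (rule card_UN_disjoint[OF P(1) fin disj])
    also have "\<dots> = (\<Sum>V\<in>K. card (coefs V t))"
      using lat_count[OF P(3) P(2) tpos] by (intro sum.cong refl) blast
    finally have c: "int (card (int_lattice \<inter> (\<lambda>x. real t *\<^sub>R x) ` underlying_space K))
        = (\<Sum>V\<in>K. int (card (coefs V t)))" by simp
    have m: "int (card (coefs V t)) mod int n = (-1)^(card V - 1) mod int n" if V: "V \<in> K" for V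
    proof (rule coefs_mod[OF P(3)[OF V] P(4)[OF V] P(2)[OF V] KL[OF V]])
      have "card V - 1 \<le> D" using cardV[OF V] by simp
      then have "fact (card V - 1) dvd (fact D :: nat)" by (rule fact_dvd)
      then show "n * fact (card V - 1) dvd t" unfolding t_def by (rule mult_dvd_mono[OF dvd_refl])
      show "card V \<le> t" using cardV[OF V] tD by simp
    qed
    have s: "(\<Sum>V\<in>K. int (card (coefs V t)) mod int n) = (\<Sum>V\<in>K. (-1)^(card V - 1) mod int n)"
      by (rule sum.cong[OF refl m])
    have "(\<Sum>V\<in>K. int (card (coefs V t))) mod int n = (\<Sum>V\<in>K. int (card (coefs V t)) mod int n) mod int n"
      by (rule mod_sum_eq[symmetric])
    also have "\<dots> = (\<Sum>V\<in>K. (-1)^(card V - 1) mod int n) mod int n"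
      by (simp only: s)
    also have "\<dots> = euler_char K mod int n"
      unfolding euler_char_def by (rule mod_sum_eq)
    finally show "int (card (int_lattice \<inter> (\<lambda>x. real t *\<^sub>R x) ` underlying_space K)) mod int n
          = euler_char K mod int n" using c by simp
  qed
qed

end
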